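(* Let $0<p_0<1$, $0\le\beta<1$, $\epsilon>0$, $\omega\ge 0$, and let $\alpha\in[0,1]$ satisfy $$\alpha\le\frac{1-\cos[\beta\arccos(1-2p_0)]}{2p_0}.$$ Put $T_c=\frac{\arccos(1-2p_0)}{\epsilon}$. Let $\omega(t),\epsilon_x(t),\epsilon_y(t)$ be real-valued functions of time with $|\omega(t)|\le\omega$ and $\sqrt{\epsilon_x^2(t)+\epsilon_y^2(t)}\le\epsilon$, and let $H(t)=[1+\omega(t)]I_z+\epsilon_x(t)I_x+\epsilon_y(t)I_y$. Suppose the pure state $|\psi(t)\rangle$ of a single qubit evolves according to $\frac{d}{dt}|\psi(t)\rangle=-iH(t)|\psi(t)\rangle$ from an initial state $|\psi(0)\rangle$ satisfying $|\langle\psi(0)|1\rangle|^2\le\alpha p_0$. Then for every $t\in[0,(1-\beta)T_c]$ the state lies in $\mathcal{D}_c=\{|\psi\rangle: |\langle 0|\psi\rangle|^2\ge 1-p_0\}$; equivalently, if a projective measurement of $\sigma_z$ is made at time $t$, the probability of failure $p=|\langle 1|\psi(t)\rangle|^2$ is at most $p_0$.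
   Context: $\sigma_x=\begin{pmatrix}0&1\\1&0\end{pmatrix}$, $\sigma_y=\begin{pmatrix}0&-i\\i&0\end{pmatrix}$, $\sigma_z=\begin{pmatrix}1&0\\0&-1\end{pmatrix}$ are the Pauli matrices and $I_j=\frac12\sigma_j$ for $j=x,y,z$. $|0\rangle=(1,0)^T$ and $|1\rangle=(0,1)^T$ are the eigenvectors of $\sigma_z$ with eigenvalues $1$ and $-1$. Units with $\hbar=1$. The "probability of failure" is the probability that a $\sigma_z$ measurement yields $|1\rangle$. *)

theory Defs
  imports "HOL-Analysis.Analysis"
begin

text \<open>Single-qubit state vectors are pairs (amplitude of |0>, amplitude of |1>)
  in complex x complex.\<close>

type_synonym qstate = "complex \<times> complex"

definition ket0 :: qstate where "ket0 = (1, 0)"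
definition ket1 :: qstate where "ket1 = (0, 1)"

definition braket :: "qstate \<Rightarrow> qstate \<Rightarrow> complex" where
  "braket u v = cnj (fst u) * fst v + cnj (snd u) * snd v"

definition cscale :: "complex \<Rightarrow> qstate \<Rightarrow> qstate" where
  "cscale c u = (c * fst u, c * snd u)"

definition sigma_x :: "qstate \<Rightarrow> qstate" where
  "sigma_x u = (snd u, fst u)"
definition sigma_y :: "qstate \<Rightarrow> qstate" where
  "sigma_y u = (- \<i> * snd u, \<i> * fst u)"
definition sigma_z :: "qstate \<Rightarrow> qstate" where
  "sigma_z u = (fst u, - snd u)"

definition I_x :: "qstate \<Rightarrow> qstate" where "I_x u = cscale (1/2) (sigma_x u)"
definition I_y :: "qstate \<Rightarrow> qstate" where "I_y u = cscale (1/2) (sigma_y u)"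
definition I_z :: "qstate \<Rightarrow> qstate" where "I_z u = cscale (1/2) (sigma_z u)"

definition hamiltonian :: "real \<Rightarrow> real \<Rightarrow> real \<Rightarrow> qstate \<Rightarrow> qstate" where
  "hamiltonian om ex ey u =
     cscale (complex_of_real (1 + om)) (I_z u) + cscale (complex_of_real ex) (I_x u)
     + cscale (complex_of_real ey) (I_y u)"

end

theory Submission
  imports Defs
begin

lemma hvd_snd: "(f has_vector_derivative v) F \<Longrightarrow> ((\<lambda>t. snd (f t)) has_vector_derivative snd v) F"
  unfolding has_vector_derivative_def
  by (drule has_derivative_snd) simp

lemma hvd_fst: "(f has_vector_derivative v) F \<Longrightarrow> ((\<lambda>t. fst (f t)) has_vector_derivative fst v) F"
  unfolding has_vector_derivative_def
  by (drule has_derivative_fst) simp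

lemma hvd_normsq:
  fixes b :: "real \<Rightarrow> complex"
  assumes "(b has_vector_derivative v) (at t within S)"
  shows "((\<lambda>t. (cmod (b t))\<^sup>2) has_real_derivative 2 * Re (cnj (b t) * v)) (at t within S)"
proof -
  have R: "((\<lambda>x. Re (b x)) has_field_derivative (Re v)) (at t within S)"
   and I: "((\<lambda>x. Im (b x)) has_field_derivative (Im v)) (at t within S)"
    using assms by (auto simp: has_vector_derivative_complex_iff)
  have e: "(\<lambda>t. (cmod (b t))\<^sup>2) = (\<lambda>t. (Re (b t))^2 + (Im (b t))^2)"
    by (simp add: cmod_power2)
  show ?thesis unfolding e
    by (rule derivative_eq_intros R I refl)+ (simp add: algebra_simps)
qed

lemma ham_snd: "snd (cscale (- \<i>) (hamiltonian w ex ey u)) =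
   \<i> * complex_of_real (1+w)/2 * snd u + (- \<i> * complex_of_real ex + complex_of_real ey)/2 * fst u"
  by (simp add: cscale_def hamiltonian_def I_x_def I_y_def I_z_def sigma_x_def sigma_y_def sigma_z_def field_simps)
lemma ham_fst: "fst (cscale (- \<i>) (hamiltonian w ex ey u)) =
   - \<i> * complex_of_real (1+w)/2 * fst u + (- \<i> * complex_of_real ex - complex_of_real ey)/2 * snd u"
  by (simp add: cscale_def hamiltonian_def I_x_def I_y_def I_z_def sigma_x_def sigma_y_def sigma_z_def field_simps)

lemma cons: "2 * Re (cnj a * (- \<i> * complex_of_real (1+w)/2 * a + (- \<i> * complex_of_real ex - complex_of_real ey)/2 * b))
  + 2 * Re (cnj b * (\<i> * complex_of_real (1+w)/2 * b + (- \<i> * complex_of_real ex + complex_of_real ey)/2 * a)) = 0"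
  by (simp add: algebra_simps) (simp add: field_simps)

lemma qbound:
  assumes "sqrt (ex^2 + ey^2) \<le> e"
  shows "2 * Re (cnj b * (\<i> * complex_of_real (1+w)/2 * b + (- \<i> * complex_of_real ex + complex_of_real ey)/2 * a))
    \<le> e * cmod a * cmod b"
proof -
  have "2 * Re (cnj b * (\<i> * complex_of_real (1+w)/2 * b + (- \<i> * complex_of_real ex + complex_of_real ey)/2 * a))
     = Re (cnj b * (- \<i> * complex_of_real ex + complex_of_real ey) * a)"
    by (simp add: algebra_simps) (simp add: field_simps)
  also have "\<dots> \<le> cmod (cnj b * (- \<i> * complex_of_real ex + complex_of_real ey) * a)"
    by (rule complex_Re_le_cmod)
  also have "\<dots> = cmod b * sqrt (ex^2 + ey^2) * cmod a"
  proof -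
    have "cmod (- \<i> * complex_of_real ex + complex_of_real ey) = sqrt (ex^2 + ey^2)"
      by (simp add: cmod_def power2_eq_square)
    then show ?thesis by (simp add: norm_mult)
  qed
  also have "\<dots> \<le> cmod b * e * cmod a"
    by (intro mult_right_mono mult_left_mono assms) auto
  finally show ?thesis by (simp add: algebra_simps)
qed


theorem theorem1:
  fixes p0 \<beta> \<epsilon> \<omega> \<alpha> :: real
    and \<omega>t \<epsilon>x \<epsilon>y :: "real \<Rightarrow> real"
    and \<psi> :: "real \<Rightarrow> qstate"
  assumes p0: "0 < p0" "p0 < 1"
    and beta: "0 \<le> \<beta>" "\<beta> < 1"
    and eps: "\<epsilon> > 0"
    and om: "\<omega> \<ge> 0"
    and alpha: "0 \<le> \<alpha>" "\<alpha> \<le> 1"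
    and alpha_bound: "\<alpha> \<le> (1 - cos (\<beta> * arccos (1 - 2 * p0))) / (2 * p0)"
    and om_bound: "\<And>t. \<bar>\<omega>t t\<bar> \<le> \<omega>"
    and eps_bound: "\<And>t. sqrt ((\<epsilon>x t)\<^sup>2 + (\<epsilon>y t)\<^sup>2) \<le> \<epsilon>"
    and pure: "braket (\<psi> 0) (\<psi> 0) = 1"
    and ode: "\<And>t. t \<ge> 0 \<Longrightarrow>
       (\<psi> has_vector_derivative cscale (- \<i>) (hamiltonian (\<omega>t t) (\<epsilon>x t) (\<epsilon>y t) (\<psi> t)))
         (at t within {0..})"
    and init: "(cmod (braket (\<psi> 0) ket1))\<^sup>2 \<le> \<alpha> * p0"
  shows "\<forall>t \<in> {0 .. (1 - \<beta>) * (arccos (1 - 2 * p0) / \<epsilon>)}.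
           (cmod (braket ket0 (\<psi> t)))\<^sup>2 \<ge> 1 - p0 \<and> (cmod (braket ket1 (\<psi> t)))\<^sup>2 \<le> p0"
proof -
  define a where "a t = fst (\<psi> t)" for t
  define b where "b t = snd (\<psi> t)" for t
  define q where "q t = (cmod (b t))\<^sup>2" for t
  define N where "N t = (cmod (a t))\<^sup>2 + q t" for t
  define ad where "ad t = - \<i> * complex_of_real (1+\<omega>t t)/2 * a t + (- \<i> * complex_of_real (\<epsilon>x t) - complex_of_real (\<epsilon>y t))/2 * b t" for t
  define bd where "bd t = \<i> * complex_of_real (1+\<omega>t t)/2 * b t + (- \<i> * complex_of_real (\<epsilon>x t) + complex_of_real (\<epsilon>y t))/2 * a t" for t
  define qd where "qd t = 2 * Re (cnj (b t) * bd t)" for t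
  have ader: "(a has_vector_derivative ad t) (at t within {0..})" if "t \<ge> 0" for t
    using hvd_fst[OF ode[OF that]] unfolding a_def[abs_def] ad_def ham_fst by (simp add: a_def b_def)
  have bder: "(b has_vector_derivative bd t) (at t within {0..})" if "t \<ge> 0" for t
    using hvd_snd[OF ode[OF that]] unfolding b_def[abs_def] bd_def ham_snd by (simp add: a_def b_def)
  have qder: "(q has_real_derivative qd t) (at t within {0..})" if "t \<ge> 0" for t
    unfolding q_def[abs_def] qd_def by (rule hvd_normsq[OF bder[OF that]])
  have qd_le: "qd t \<le> \<epsilon> * cmod (a t) * cmod (b t)" for t
    unfolding qd_def bd_def by (rule qbound[OF eps_bound])
  have Nder: "(N has_real_derivative 0) (at t within {0..})" if "t \<ge> 0" for t
  proof -
    have "(N has_real_derivative (2 * Re (cnj (a t) * ad t) + qd t)) (at t within {0..})"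
      unfolding N_def[abs_def] by (rule derivative_eq_intros hvd_normsq[OF ader[OF that]] qder[OF that] refl)+
    moreover have "2 * Re (cnj (a t) * ad t) + qd t = 0"
      unfolding ad_def qd_def bd_def by (rule cons)
    ultimately show ?thesis by simp
  qed
  obtain c where c: "\<forall>t\<in>{0..}. N t = c"
    using has_field_derivative_zero_constant[of "{0::real..}" N] Nder by auto
  have N0: "N 0 = 1"
  proof -
    have "Re (braket (\<psi> 0) (\<psi> 0)) = 1" using pure by simp
    then show ?thesis unfolding N_def q_def a_def b_def braket_def
      unfolding cmod_power2 by (simp add: power2_eq_square)
  qed
  have N1: "N t = 1" if "t \<ge> 0" for t using c N0 that by auto
  define A where "A = arccos (1 - 2*p0)"
  define T where "T = (1-\<beta>)*(A/\<epsilon>)"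
  define \<theta>0 where "\<theta>0 = \<beta>*A"
  have A: "0 < A" "A < pi" using arccos_lt_bounded[of "1 - 2*p0"] p0 unfolding A_def by auto
  have cosA: "cos A = 1 - 2*p0" unfolding A_def using p0 by (intro cos_arccos) auto
  have T0: "T \<ge> 0" unfolding T_def using beta eps A by auto
  have epsT: "\<epsilon> * T = (1-\<beta>)*A" unfolding T_def using eps by simp
  have th0: "0 \<le> \<theta>0" "\<theta>0 \<le> A" unfolding \<theta>0_def using beta A
    by (auto simp: mult_le_cancel_right1)
  have qa: "(cmod (a t))\<^sup>2 = 1 - q t" if "t \<ge> 0" for t using N1[OF that] unfolding N_def by simp
  have q01: "0 \<le> q t" "q t \<le> 1" if "t \<ge> 0" for t using qa[OF that] unfolding q_def
    by (auto simp del: norm_ge_zero simp: zero_le_power2) (metis qa[OF that] q_def diff_ge_0_iff_ge zero_le_power2)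
  have ab: "cmod (a t) * cmod (b t) = sqrt (q t * (1 - q t))" if "t \<ge> 0" for t
  proof -
    have "sqrt (q t * (1 - q t)) = sqrt ((cmod (b t))\<^sup>2 * (cmod (a t))\<^sup>2)" using qa[OF that] q_def by simp
    also have "\<dots> = cmod (b t) * cmod (a t)" by (simp add: real_sqrt_mult)
    finally show ?thesis by simp
  qed
  have q0: "q 0 \<le> (1 - cos \<theta>0)/2"
  proof -
    have "braket (\<psi> 0) ket1 = cnj (b 0)" unfolding braket_def ket1_def b_def by simp
    then have "q 0 \<le> \<alpha> * p0" using init unfolding q_def by simp
    also have "\<dots> \<le> (1 - cos \<theta>0) / (2 * p0) * p0"
      using alpha_bound p0 unfolding \<theta>0_def A_def by (intro mult_right_mono) auto
    also have "\<dots> = (1 - cos \<theta>0)/2" using p0 by simp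
    finally show ?thesis .
  qed
  have key: "\<forall>t\<in>{0..T}. q t < (1 - cos (\<theta>0 + (\<epsilon>+\<delta>)*t + \<delta>))/2"
    if dpos: "\<delta> > 0" and dsmall: "\<delta>*(T+1) < pi - A" for \<delta>
  proof -
    define \<phi> where "\<phi> t = \<theta>0 + (\<epsilon>+\<delta>)*t + \<delta>" for t
    define g where "g t = (1 - cos (\<phi> t))/2 - q t" for t
    have \<phi>rng: "0 < \<phi> t \<and> \<phi> t < pi" if "0 \<le> t" "t \<le> T" for t
    proof -
      have h0: "\<epsilon>*t \<le> \<epsilon>*T" using that eps by (intro mult_left_mono) auto
      have h1: "\<delta>*t \<le> \<delta>*T" using that dpos by (intro mult_left_mono) auto
      have h2: "0 \<le> (\<epsilon>+\<delta>)*t" using that eps dpos by simp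
      have "\<phi> t \<le> \<theta>0 + \<epsilon>*T + \<delta>*T + \<delta>" unfolding \<phi>_def using h0 h1 by (simp add: algebra_simps)
      moreover have "\<theta>0 + \<epsilon>*T = A" using epsT unfolding \<theta>0_def by (simp add: algebra_simps)
      moreover have "0 < \<phi> t" unfolding \<phi>_def using h2 th0 dpos by simp
      ultimately show ?thesis using dsmall by (simp add: algebra_simps)
    qed
    have gder: "(g has_real_derivative ((\<epsilon>+\<delta>) * sin (\<phi> t)/2 - qd t)) (at t within {0..})"
      if "t \<ge> 0" for t
      unfolding g_def[abs_def] \<phi>_def
      by (auto intro!: derivative_eq_intros qder[OF that] simp: algebra_simps)
    have gcont: "continuous_on {0..} g"
      by (rule DERIV_continuous_on[OF gder]) auto
    have g0: "g 0 > 0"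
    proof -
      have "cos (\<phi> 0) < cos \<theta>0"
        using \<phi>rng[of 0] T0 th0 dpos unfolding \<phi>_def by (intro cos_monotone_0_pi) auto
      then show ?thesis using q0 unfolding g_def by simp
    qed
    show ?thesis
    proof (rule ccontr)
      assume "\<not> ?thesis"
      then obtain t2 where t2: "0 \<le> t2" "t2 \<le> T" "g t2 \<le> 0"
        unfolding g_def \<phi>_def by (auto simp: not_less)
      define Z where "Z = {0..t2} \<inter> g -` {..0}"
      have clZ: "closed Z" unfolding Z_def
        by (rule continuous_closed_preimage) (auto intro: continuous_on_subset[OF gcont])
      have t2Z: "t2 \<in> Z" using t2 unfolding Z_def by auto
      have bdd: "bdd_below Z" unfolding Z_def by (auto intro: bdd_belowI[of _ 0])
      define t1 where "t1 = Inf Z"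
      have t1Z: "t1 \<in> Z" unfolding t1_def using closed_contains_Inf[OF _ bdd clZ] t2Z by auto
      have t1le: "t1 \<le> s" if "s \<in> Z" for s unfolding t1_def using cInf_lower[OF that bdd] .
      have t1: "0 \<le> t1" "t1 \<le> t2" "g t1 \<le> 0" using t1Z unfolding Z_def by auto
      have t1pos: "t1 > 0" using t1 g0 by (cases "t1 = 0") auto
      obtain x where x: "0 \<le> x" "x \<le> t1" "g x = 0"
        using IVT2'[of g t1 0 0] t1 g0 continuous_on_subset[OF gcont, of "{0..t1}"] by auto
      have "x \<in> Z" using x t1 unfolding Z_def by auto
      then have "x = t1" using t1le x by force
      then have gt1: "g t1 = 0" using x by simp
      have rng: "0 < \<phi> t1" "\<phi> t1 < pi" using \<phi>rng[of t1] t1 t2 by auto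
      have sinpos: "sin (\<phi> t1) > 0" using rng by (intro sin_gt_zero) auto
      have qt1: "q t1 = (1 - cos (\<phi> t1))/2" using gt1 unfolding g_def by simp
      have "q t1 * (1 - q t1) = (sin (\<phi> t1) / 2)\<^sup>2"
      proof -
        have sc: "sin (\<phi> t1) * sin (\<phi> t1) = 1 - cos (\<phi> t1) * cos (\<phi> t1)"
          using sin_squared_eq[of "\<phi> t1"] by (simp add: power2_eq_square)
        show ?thesis unfolding qt1 power2_eq_square power_divide by (simp add: sc field_simps)
      qed
      then have sq: "sqrt (q t1 * (1 - q t1)) = sin (\<phi> t1) / 2" using sinpos by simp
      have "qd t1 \<le> \<epsilon> * (cmod (a t1) * cmod (b t1))" using qd_le[of t1] by (simp add: mult.assoc)
      also have "\<dots> = \<epsilon> * (sin (\<phi> t1) / 2)" using ab[of t1] sq t1 by simp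
      finally have X: "qd t1 \<le> \<epsilon> * (sin (\<phi> t1) / 2)" .
      have P: "0 < \<delta> * sin (\<phi> t1)" using dpos sinpos by simp
      have E: "(\<epsilon>+\<delta>) * sin (\<phi> t1)/2 = \<epsilon> * (sin (\<phi> t1) / 2) + \<delta> * sin (\<phi> t1) / 2"
        by (simp add: algebra_simps)
      have "0 < (\<epsilon>+\<delta>) * sin (\<phi> t1)/2 - qd t1" using X P E by linarith
      from has_real_derivative_pos_inc_left[OF gder[of t1] this] t1
      obtain d where d: "d > 0" "\<And>h. h > 0 \<Longrightarrow> t1 - h \<in> {0..} \<Longrightarrow> h < d \<Longrightarrow> g (t1 - h) < g t1"
        by auto
      define h where "h = min (d/2) t1"
      have h: "h > 0" "h < d" "t1 - h \<ge> 0" using d t1pos unfolding h_def by auto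
      have "g (t1 - h) < 0" using d(2)[OF h(1) _ h(2)] h(3) gt1 by auto
      then have "t1 - h \<in> Z" using h t1 unfolding Z_def by auto
      then show False using t1le h by force
    qed
  qed
  show ?thesis
  proof
    fix t assume t: "t \<in> {0 .. (1 - \<beta>) * (arccos (1 - 2 * p0) / \<epsilon>)}"
    then have t0: "0 \<le> t" "t \<le> T" unfolding T_def A_def by auto
    define db where "db = (pi - A)/(T+1)"
    have db: "db > 0" unfolding db_def using A T0 by simp
    have lim: "((\<lambda>\<delta>. (1 - cos (\<theta>0 + (\<epsilon>+\<delta>)*t + \<delta>))/2) \<longlongrightarrow> (1 - cos (\<theta>0 + \<epsilon>*t))/2) (at_right 0)"
      by (auto intro!: tendsto_eq_intros)
    have ev: "eventually (\<lambda>\<delta>. q t \<le> (1 - cos (\<theta>0 + (\<epsilon>+\<delta>)*t + \<delta>))/2) (at_right 0)"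
      unfolding eventually_at_right_field
    proof (intro exI[of _ db] conjI allI impI)
      fix \<delta> :: real assume "0 < \<delta>" "\<delta> < db"
      moreover have "\<delta>*(T+1) < pi - A" using \<open>\<delta> < db\<close> T0 unfolding db_def by (simp add: field_simps)
      ultimately have "\<forall>t\<in>{0..T}. q t < (1 - cos (\<theta>0 + (\<epsilon>+\<delta>)*t + \<delta>))/2" using key by blast
      then show "q t \<le> (1 - cos (\<theta>0 + (\<epsilon>+\<delta>)*t + \<delta>))/2" using t0 by (auto intro: less_imp_le)
    qed (use db in auto)
    have qle: "q t \<le> (1 - cos (\<theta>0 + \<epsilon>*t))/2"
      by (rule tendsto_le[OF trivial_limit_at_right_real lim tendsto_const ev])
    have et: "\<epsilon>*t \<le> \<epsilon>*T" using t0 eps by (intro mult_left_mono) auto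
    have et0: "0 \<le> \<epsilon>*t" using t0 eps by simp
    have eA: "\<theta>0 + \<epsilon>*T = A" using epsT unfolding \<theta>0_def by (simp add: algebra_simps)
    have "cos A \<le> cos (\<theta>0 + \<epsilon>*t)"
      by (rule cos_monotone_0_pi_le) (use et et0 eA th0 A in linarith)+
    then have qp: "q t \<le> p0" using qle cosA by simp
    have e1: "braket ket1 (\<psi> t) = b t" unfolding braket_def ket1_def b_def by simp
    have e0: "braket ket0 (\<psi> t) = a t" unfolding braket_def ket0_def a_def by simp
    show "(cmod (braket ket0 (\<psi> t)))\<^sup>2 \<ge> 1 - p0 \<and> (cmod (braket ket1 (\<psi> t)))\<^sup>2 \<le> p0"
      unfolding e0 e1 using qa[OF t0(1)] qp q_def by simp
  qed
qed

end
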